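(* Let $G$ be a finite simple graph with $n=|V(G)|$, and let $v_1,\dots,v_r$ be a $\beta$-sequence in $G$ such that $d(v_1)+\dots+d(v_r)\le (r-1)n$. Then $r\ge W(G)$.
   Context: Graphs are finite, undirected, without loops or multiple edges; $N(v)$ is the set of vertices adjacent to $v$, $d(v)=|N(v)|$, and $N(v_1,\dots,v_k)=\bigcap_{j=1}^k N(v_j)$. Define $W(G)=\sum_{v\in V(G)}\frac{1}{n-d(v)}$. A sequence $v_1,\dots,v_r$ of vertices is a $\beta$-sequence in $G$ if (i) $d(v_1)=\max\{d(v)\mid v\in V(G)\}$, and (ii) for $2\le i\le r$, $v_i\in N(v_1,\dots,v_{i-1})$ and $d(v_i)=\max\{d(v)\mid v\in N(v_1,\dots,v_{i-1})\}$ (degrees taken in $G$). *)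

theory Defs
  imports Main "HOL-Library.Multiset" Complex_Main
begin

definition simple_graph :: "'a set \<Rightarrow> ('a \<Rightarrow> 'a \<Rightarrow> bool) \<Rightarrow> bool" where
  "simple_graph V E \<longleftrightarrow> finite V \<and> (\<forall>u v. E u v \<longrightarrow> u \<in> V \<and> v \<in> V)
     \<and> (\<forall>u v. E u v \<longrightarrow> E v u) \<and> (\<forall>v. \<not> E v v)"

definition nbhd :: "'a set \<Rightarrow> ('a \<Rightarrow> 'a \<Rightarrow> bool) \<Rightarrow> 'a \<Rightarrow> 'a set" where
  "nbhd V E v = {u \<in> V. E v u}"

definition deg :: "'a set \<Rightarrow> ('a \<Rightarrow> 'a \<Rightarrow> bool) \<Rightarrow> 'a \<Rightarrow> nat" where
  "deg V E v = card (nbhd V E v)"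

definition common_nbhd :: "'a set \<Rightarrow> ('a \<Rightarrow> 'a \<Rightarrow> bool) \<Rightarrow> 'a list \<Rightarrow> 'a set" where
  "common_nbhd V E vs = {u \<in> V. \<forall>w \<in> set vs. E w u}"

definition W :: "'a set \<Rightarrow> ('a \<Rightarrow> 'a \<Rightarrow> bool) \<Rightarrow> real" where
  "W V E = (\<Sum>v\<in>V. 1 / (real (card V) - real (deg V E v)))"

text \<open>beta-sequence v_1,...,v_r (as list vs, 0-indexed, r = length vs \<ge> 1).\<close>
definition beta_seq :: "'a set \<Rightarrow> ('a \<Rightarrow> 'a \<Rightarrow> bool) \<Rightarrow> 'a list \<Rightarrow> bool" where
  "beta_seq V E vs \<longleftrightarrow> vs \<noteq> [] \<and> set vs \<subseteq> V
     \<and> deg V E (vs ! 0) = Max (deg V E ` V)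
     \<and> (\<forall>i. 1 \<le> i \<and> i < length vs \<longrightarrow>
           vs ! i \<in> common_nbhd V E (take i vs)
         \<and> deg V E (vs ! i) = Max (deg V E ` common_nbhd V E (take i vs)))"

end

theory Submission
  imports Defs
begin

lemma key_ineq:
  fixes a b c :: real
  assumes "0 < a" "a \<le> c" "b \<le> a"
  shows "b / a - b / c \<le> 1 - a / c"
proof -
  have c: "0 < c" using assms by linarith
  have "b * (c - a) \<le> a * (c - a)" using assms by (intro mult_right_mono) auto
  hence "b * (c - a) / (a * c) \<le> a * (c - a) / (a * c)"
    using assms c by (intro divide_right_mono) auto
  moreover have "b / a - b / c = b * (c - a) / (a * c)" using assms c by (simp add: field_simps)
  moreover have "1 - a / c = a * (c - a) / (a * c)" using assms c by (simp add: field_simps)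
  ultimately show ?thesis by simp
qed

theorem theorem2:
  fixes V :: "'a set" and E :: "'a \<Rightarrow> 'a \<Rightarrow> bool" and vs :: "'a list"
  assumes "simple_graph V E"
    and "beta_seq V E vs"
    and "(\<Sum>i<length vs. real (deg V E (vs ! i))) \<le> (real (length vs) - 1) * real (card V)"
  shows "real (length vs) \<ge> W V E"
proof -
  have fin: "finite V" and sym: "\<And>u v. E u v \<Longrightarrow> E v u" and irr: "\<And>v. \<not> E v v"
    using assms(1) unfolding simple_graph_def by auto
  define r where "r = length vs"
  define p where "p = r - 1"
  define n where "n = card V"
  define N where "N k = common_nbhd V E (take k vs)" for k
  define x where "x i = real n - real (deg V E (vs ! i))" for i
  define f where "f v = 1 / (real n - real (deg V E v))" for v
  define S where "S k = sum f (N k)" for k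
  have bs: "vs \<noteq> []" "set vs \<subseteq> V" "deg V E (vs ! 0) = Max (deg V E ` V)"
    "\<And>i. 1 \<le> i \<Longrightarrow> i < length vs \<Longrightarrow> vs ! i \<in> common_nbhd V E (take i vs)
         \<and> deg V E (vs ! i) = Max (deg V E ` common_nbhd V E (take i vs))"
    using assms(2) unfolding beta_seq_def by auto
  have rpos: "r = Suc p" using bs(1) unfolding p_def r_def by (cases vs) auto
  have N0: "N 0 = V" unfolding N_def common_nbhd_def by auto
  have Nsub: "N k \<subseteq> V" for k unfolding N_def common_nbhd_def by auto
  have Nfin: "finite (N k)" for k using Nsub fin finite_subset by blast
  have Nstep: "N (Suc i) = N i \<inter> nbhd V E (vs ! i)" if "i < r" for i
    using that unfolding N_def common_nbhd_def nbhd_def r_def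
    by (auto simp: take_Suc_conv_app_nth)
  have Nanti: "N j \<subseteq> N i" if "i \<le> j" for i j
    using that set_take_subset_set_take[OF that, of vs] unfolding N_def common_nbhd_def by auto
  have mem: "vs ! i \<in> N i \<and> deg V E (vs ! i) = Max (deg V E ` N i)" if "i < r" for i
  proof (cases "i = 0")
    case True
    then show ?thesis proof -
      have "vs ! 0 \<in> V" using bs(1,2) nth_mem[of 0 vs] by auto
      thus ?thesis using True bs(3) N0 by simp
    qed
  next
    case False
    then show ?thesis using bs(4)[of i] that unfolding N_def r_def by auto
  qed
  have degle: "deg V E v \<le> deg V E (vs ! i)" if "i < r" "v \<in> N i" for i v
    using mem[OF that(1)] that(2) Nfin by (simp add: Max_ge)
  have deglt: "deg V E v < n" if "v \<in> V" for v
  proof -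
    have "nbhd V E v \<subseteq> V - {v}" using irr unfolding nbhd_def by auto
    hence "deg V E v \<le> card (V - {v})" unfolding deg_def using fin by (simp add: card_mono)
    thus ?thesis using that fin unfolding n_def
      by (metis card_Diff1_less le_less_trans)
  qed
  have vsV: "vs ! i \<in> V" if "i < r" for i using mem[OF that] Nsub by blast
  have xpos: "x i > 0" if "i < r" for i using deglt[OF vsV[OF that]] unfolding x_def by simp
  have xmono: "x i \<le> x j" if "i \<le> j" "j < r" for i j
  proof -
    have "vs ! j \<in> N i" using mem[OF that(2)] Nanti[OF that(1)] by blast
    hence "deg V E (vs ! j) \<le> deg V E (vs ! i)" using degle that by auto
    thus ?thesis unfolding x_def by simp
  qed
  have fle: "f v \<le> 1 / x i" if "i < r" "v \<in> N i" for i v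
  proof -
    have "x i \<le> real n - real (deg V E v)" using degle[OF that] unfolding x_def by simp
    thus ?thesis unfolding f_def using xpos[OF that(1)] by (simp add: frac_le)
  qed
  have cardL: "real (card (N i - N (Suc i))) \<le> x i" if "i < r" for i
  proof -
    have sub: "N i - N (Suc i) \<subseteq> V - nbhd V E (vs ! i)" using Nstep[OF that] Nsub by auto
    have nb: "nbhd V E (vs ! i) \<subseteq> V" unfolding nbhd_def by auto
    have "card (N i - N (Suc i)) \<le> card (V - nbhd V E (vs ! i))"
      using sub fin by (simp add: card_mono)
    also have "\<dots> = n - deg V E (vs ! i)" using nb fin unfolding n_def deg_def
      by (simp add: card_Diff_subset finite_subset)
    finally show ?thesis using deglt[OF vsV[OF that]] unfolding x_def by linarith
  qed
  have main: "S k \<le> real (p - k) + (real (card (N k)) - (\<Sum>j\<in>{k..<p}. x j)) / x p" if "k \<le> p" for k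
    using that
  proof (induction k rule: inc_induct)
    case base
    have "S p \<le> (\<Sum>v\<in>N p. 1 / x p)" unfolding S_def
      by (rule sum_mono) (use fle rpos in auto)
    then show ?case by simp
  next
    case (step k)
    have kr: "k < r" using step rpos by simp
    have sub: "N (Suc k) \<subseteq> N k" using Nanti by simp
    have split: "S k = sum f (N k - N (Suc k)) + S (Suc k)"
      unfolding S_def using sum.subset_diff[OF sub Nfin] .
    have "sum f (N k - N (Suc k)) \<le> (\<Sum>v\<in>N k - N (Suc k). 1 / x k)"
      by (rule sum_mono) (use fle kr in auto)
    hence L: "sum f (N k - N (Suc k)) \<le> real (card (N k - N (Suc k))) / x k" by simp
    have cN: "real (card (N k)) = real (card (N k - N (Suc k))) + real (card (N (Suc k)))"
      using card_Diff_subset[OF finite_subset[OF sub Nfin] sub] card_mono[OF Nfin sub] by simp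
    have sx: "(\<Sum>j\<in>{k..<p}. x j) = x k + (\<Sum>j\<in>{Suc k..<p}. x j)"
      using step(2) by (simp add: sum.atLeast_Suc_lessThan)
    have pk: "real (p - k) = real (p - Suc k) + 1" using step(2) by simp
    have K: "real (card (N k - N (Suc k))) / x k - real (card (N k - N (Suc k))) / x p \<le> 1 - x k / x p"
      by (rule key_ineq) (use xpos xmono cardL kr rpos step(2) in auto)
    define b where "b = real (card (N k - N (Suc k)))"
    define c where "c = real (card (N (Suc k)))"
    define T where "T = (\<Sum>j\<in>{Suc k..<p}. x j)"
    have xp: "x p > 0" using xpos rpos by simp
    have "S k \<le> b / x k + (real (p - Suc k) + (c - T) / x p)"
      using split L step(3) unfolding b_def c_def T_def by linarith
    also have "\<dots> \<le> real (p - Suc k) + 1 + (b + c - x k - T) / x p"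
    proof -
      have e: "(b + c - x k - T) / x p = b / x p + (c - T) / x p - x k / x p"
        by (simp add: diff_divide_distrib add_divide_distrib)
      show ?thesis using K[folded b_def] e by linarith
    qed
    finally show ?case using cN sx pk unfolding b_def c_def T_def by (simp add: algebra_simps)
  qed
  have WS: "W V E = S 0" unfolding W_def S_def N0 f_def n_def by simp
  have h0: "W V E \<le> real p + (real n - (\<Sum>j<p. x j)) / x p"
    using main[of 0] WS N0 by (simp add: atLeast0LessThan n_def)
  have sumx: "(\<Sum>j<r. x j) = real r * real n - (\<Sum>i<r. real (deg V E (vs ! i)))"
    unfolding x_def by (simp add: sum_subtractf)
  have "(\<Sum>j<r. x j) \<ge> real n"
    using assms(3) sumx unfolding r_def[symmetric] n_def[symmetric] by (simp add: algebra_simps)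
  hence "real n - (\<Sum>j<p. x j) \<le> x p" using rpos by simp
  hence "(real n - (\<Sum>j<p. x j)) / x p \<le> 1" using xpos rpos by simp
  hence "W V E \<le> real p + 1" using h0 by linarith
  thus ?thesis using rpos unfolding r_def by simp
qed

end
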